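(* Let $n\ge1$ and let $\wp\in \mathrm{C}^{0,n+1}$ be a primitive idempotent, $E:=\mathrm{C}^{0,n+1}\wp$. Then $P_n:=\ker(\Phi: A_n\otimes_\mathbb{R} E\to A_n\otimes_\mathbb{R} E)$ is a finitely generated projective $A_n$-module and the restriction of the symmetric bilinear form $\hat\beta$ to $P_n$ is non-degenerate.
   Context: $A_n:=\mathbb{R}[x_0,\dots,x_n]/(\sum_i x_i^2-1)$. $\mathrm{C}^{0,n+1}$ is the real Clifford algebra generated by $e_0,\dots,e_n$ with $e_i^2=1$ and $e_ie_j=-e_je_i$ for $i\ne j$. $\Phi$ is the $A_n$-linear map $\Phi(a\otimes u)=\tfrac12\big(\sum_{i=0}^n x_ia\otimes e_iu + a\otimes u\big)$, i.e. left multiplication by $\tfrac12(\mathbf{x}+1)$ with $\mathbf{x}=\sum_i x_i\otimes e_i$ (it preserves $A_n\otimes E$). $\sigma$ is the canonical (reversing) involution of $\mathrm{C}^{0,n+1}$ ($\sigma(e_i)=e_i$, $\sigma(xy)=\sigma(y)\sigma(x)$), $\beta(x,y)=\operatorname{Tr}(\sigma(x)y)$ is the trace form on $\mathrm{C}^{0,n+1}$ (Tr the trace of left multiplication), and $\hat\beta(a\otimes x,b\otimes y):=ab\,\beta(x,y)$ on $A_n\otimes_\mathbb{R} E$. *)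

theory Defs
  imports "HOL-Analysis.Analysis"
begin

type_synonym pt = "nat \<Rightarrow> real"          (* points of R^{n+1}: coordinates x_0..x_n, zero beyond n *)
type_synonym cl = "nat set \<Rightarrow> real"      (* element of C^{0,n+1}: coefficient of e_S, S \<subseteq> {0..n} *)
type_synonym ael = "pt \<Rightarrow> real"          (* element of A_n, as function on the sphere S^n *)
type_synonym aeel = "pt \<Rightarrow> cl"           (* element of A_n \<otimes> C^{0,n+1}, as Clifford-valued function *)

section \<open>The ring A_n = R[x_0..x_n]/(sum x_i^2 - 1), realised as the coordinate ring of S^n\<close>

definition sphere_pts :: "nat \<Rightarrow> pt set" where
  "sphere_pts n = {x. (\<forall>i>n. x i = 0) \<and> (\<Sum>i\<le>n. (x i)^2) = 1}"

inductive_set polyfun :: "nat \<Rightarrow> (pt \<Rightarrow> real) set" for n :: nat where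
  pf_const: "(\<lambda>x. c) \<in> polyfun n"
| pf_var: "i \<le> n \<Longrightarrow> (\<lambda>x. x i) \<in> polyfun n"
| pf_add: "p \<in> polyfun n \<Longrightarrow> q \<in> polyfun n \<Longrightarrow> (\<lambda>x. p x + q x) \<in> polyfun n"
| pf_mult: "p \<in> polyfun n \<Longrightarrow> q \<in> polyfun n \<Longrightarrow> (\<lambda>x. p x * q x) \<in> polyfun n"

definition An :: "nat \<Rightarrow> ael set" where
  "An n = {f. \<exists>p\<in>polyfun n. \<forall>x. f x = (if x \<in> sphere_pts n then p x else 0)}"

definition cl_elems :: "nat \<Rightarrow> cl set" where
  "cl_elems n = {u. \<forall>S. \<not> S \<subseteq> {..n} \<longrightarrow> u S = 0}"

definition cl_sign :: "nat set \<Rightarrow> nat set \<Rightarrow> real" where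
  "cl_sign S T = (-1) ^ card {(i, j). i \<in> S \<and> j \<in> T \<and> j < i}"

text \<open>e_S e_T = cl_sign S T e_{S symmetric-difference T}, using e_i^2 = 1, e_i e_j = - e_j e_i.\<close>
definition cl_mult :: "nat \<Rightarrow> cl \<Rightarrow> cl \<Rightarrow> cl" where
  "cl_mult n u v = (\<lambda>U. \<Sum>S\<in>Pow {..n}. \<Sum>T\<in>Pow {..n}.
       if (S - T) \<union> (T - S) = U then cl_sign S T * u S * v T else 0)"

definition cl_add :: "cl \<Rightarrow> cl \<Rightarrow> cl" where
  "cl_add u v = (\<lambda>S. u S + v S)"

definition cl_basis :: "nat set \<Rightarrow> cl" where
  "cl_basis S = (\<lambda>U. if U = S then 1 else 0)"

definition cl_rev :: "cl \<Rightarrow> cl" where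
  "cl_rev u = (\<lambda>S. (-1) ^ (card S * (card S - 1) div 2) * u S)"

definition cl_tr :: "nat \<Rightarrow> cl \<Rightarrow> real" where
  "cl_tr n w = (\<Sum>S\<in>Pow {..n}. cl_mult n w (cl_basis S) S)"

definition cl_beta :: "nat \<Rightarrow> cl \<Rightarrow> cl \<Rightarrow> real" where
  "cl_beta n u v = cl_tr n (cl_mult n (cl_rev u) v)"

definition cl_idempotent :: "nat \<Rightarrow> cl \<Rightarrow> bool" where
  "cl_idempotent n e \<longleftrightarrow> e \<in> cl_elems n \<and> cl_mult n e e = e"

definition primitive_idempotent :: "nat \<Rightarrow> cl \<Rightarrow> bool" where
  "primitive_idempotent n e \<longleftrightarrow> cl_idempotent n e \<and> e \<noteq> (\<lambda>S. 0) \<and>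
     \<not> (\<exists>a b. cl_idempotent n a \<and> cl_idempotent n b \<and> a \<noteq> (\<lambda>S. 0) \<and> b \<noteq> (\<lambda>S. 0) \<and>
            cl_mult n a b = (\<lambda>S. 0) \<and> cl_mult n b a = (\<lambda>S. 0) \<and> e = cl_add a b)"

definition cl_E :: "nat \<Rightarrow> cl \<Rightarrow> cl set" where
  "cl_E n e = {cl_mult n u e | u. u \<in> cl_elems n}"

definition AEmod :: "nat \<Rightarrow> cl \<Rightarrow> aeel set" where
  "AEmod n e = {F. (\<forall>x. x \<notin> sphere_pts n \<longrightarrow> F x = (\<lambda>S. 0)) \<and>
                (\<forall>S. (\<lambda>x. F x S) \<in> An n) \<and> (\<forall>x. F x \<in> cl_E n e)}"

definition ae_add :: "aeel \<Rightarrow> aeel \<Rightarrow> aeel" where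
  "ae_add F G = (\<lambda>x S. F x S + G x S)"

definition ae_smul :: "ael \<Rightarrow> aeel \<Rightarrow> aeel" where
  "ae_smul a F = (\<lambda>x S. a x * F x S)"

definition cl_xvec :: "nat \<Rightarrow> pt \<Rightarrow> cl" where
  "cl_xvec n x = (\<lambda>U. \<Sum>i\<le>n. x i * cl_basis {i} U)"

definition Phi :: "nat \<Rightarrow> aeel \<Rightarrow> aeel" where
  "Phi n F = (\<lambda>x S. (1/2) * (cl_mult n (cl_xvec n x) (F x) S + F x S))"

definition Pn :: "nat \<Rightarrow> cl \<Rightarrow> aeel set" where
  "Pn n e = {F \<in> AEmod n e. Phi n F = (\<lambda>x S. 0)}"

definition beta_hat :: "nat \<Rightarrow> aeel \<Rightarrow> aeel \<Rightarrow> ael" where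
  "beta_hat n F G = (\<lambda>x. cl_beta n (F x) (G x))"

definition free_mod :: "nat \<Rightarrow> nat \<Rightarrow> (nat \<Rightarrow> ael) set" where
  "free_mod n m = {v. (\<forall>k<m. v k \<in> An n) \<and> (\<forall>k\<ge>m. v k = (\<lambda>x. 0))}"

definition fv_add :: "(nat \<Rightarrow> ael) \<Rightarrow> (nat \<Rightarrow> ael) \<Rightarrow> (nat \<Rightarrow> ael)" where
  "fv_add v w = (\<lambda>k x. v k x + w k x)"

definition fv_smul :: "ael \<Rightarrow> (nat \<Rightarrow> ael) \<Rightarrow> (nat \<Rightarrow> ael)" where
  "fv_smul a v = (\<lambda>k x. a x * v k x)"

definition An_submodule :: "nat \<Rightarrow> cl \<Rightarrow> aeel set \<Rightarrow> bool" where
  "An_submodule n e P \<longleftrightarrow> P \<subseteq> AEmod n e \<and> (\<lambda>x S. 0) \<in> P \<and>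
     (\<forall>F\<in>P. \<forall>G\<in>P. ae_add F G \<in> P) \<and> (\<forall>a\<in>An n. \<forall>F\<in>P. ae_smul a F \<in> P)"

text \<open>finitely generated projective = direct summand (retract) of a finite free module A_n^m\<close>
definition fg_projective :: "nat \<Rightarrow> cl \<Rightarrow> aeel set \<Rightarrow> bool" where
  "fg_projective n e P \<longleftrightarrow> An_submodule n e P \<and>
     (\<exists>m (i :: aeel \<Rightarrow> nat \<Rightarrow> ael) (r :: (nat \<Rightarrow> ael) \<Rightarrow> aeel).
        (\<forall>F\<in>P. i F \<in> free_mod n m) \<and>
        (\<forall>F\<in>P. \<forall>G\<in>P. i (ae_add F G) = fv_add (i F) (i G)) \<and>
        (\<forall>a\<in>An n. \<forall>F\<in>P. i (ae_smul a F) = fv_smul a (i F)) \<and>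
        (\<forall>v\<in>free_mod n m. r v \<in> P) \<and>
        (\<forall>v\<in>free_mod n m. \<forall>w\<in>free_mod n m. r (fv_add v w) = ae_add (r v) (r w)) \<and>
        (\<forall>a\<in>An n. \<forall>v\<in>free_mod n m. r (fv_smul a v) = ae_smul a (r v)) \<and>
        (\<forall>F\<in>P. r (i F) = F))"

definition An_linear_form :: "nat \<Rightarrow> aeel set \<Rightarrow> (aeel \<Rightarrow> ael) \<Rightarrow> bool" where
  "An_linear_form n P \<phi> \<longleftrightarrow> (\<forall>F\<in>P. \<phi> F \<in> An n) \<and>
     (\<forall>F\<in>P. \<forall>G\<in>P. \<phi> (ae_add F G) = (\<lambda>x. \<phi> F x + \<phi> G x)) \<and>
     (\<forall>a\<in>An n. \<forall>F\<in>P. \<phi> (ae_smul a F) = (\<lambda>x. a x * \<phi> F x))"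

text \<open>non-degenerate: the adjoint P \<rightarrow> Hom_{A_n}(P, A_n), F \<mapsto> B(F,-), is bijective\<close>
definition nondegenerate_on :: "nat \<Rightarrow> aeel set \<Rightarrow> (aeel \<Rightarrow> aeel \<Rightarrow> ael) \<Rightarrow> bool" where
  "nondegenerate_on n P B \<longleftrightarrow>
     (\<forall>\<phi>. An_linear_form n P \<phi> \<longrightarrow> (\<exists>!F. F \<in> P \<and> (\<forall>G\<in>P. B F G = \<phi> G)))"

end

theory Submission
  imports Defs
begin


abbreviation sdf :: "'a set \<Rightarrow> 'a set \<Rightarrow> 'a set" where
  "sdf S T \<equiv> (S - T) \<union> (T - S)"

definition invs :: "nat set \<Rightarrow> nat set \<Rightarrow> (nat \<times> nat) set" where
  "invs S T = {(i, j). i \<in> S \<and> j \<in> T \<and> j < i}"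

lemma cl_sign_invs: "cl_sign S T = (-1) ^ card (invs S T)"
  by (simp add: cl_sign_def invs_def)

lemma finite_invs: "finite S \<Longrightarrow> finite T \<Longrightarrow> finite (invs S T)"
  by (rule finite_subset[of _ "S \<times> T"]) (auto simp: invs_def)

lemma card_sdf_parity:
  assumes "finite X" "finite Y"
  shows "(-1::real) ^ card (sdf X Y) = (-1) ^ card X * (-1) ^ card Y"
proof -
  have u: "X \<union> Y = sdf X Y \<union> (X \<inter> Y)" by blast
  have "card (X \<union> Y) = card (sdf X Y) + card (X \<inter> Y)"
    unfolding u by (rule card_Un_disjoint) (use assms in auto)
  moreover have "card X + card Y = card (X \<union> Y) + card (X \<inter> Y)"
    using card_Un_Int[OF assms] by simp
  ultimately have "card X + card Y = card (sdf X Y) + 2 * card (X \<inter> Y)" by simp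
  hence "(-1::real) ^ (card X + card Y) = (-1) ^ (card (sdf X Y) + 2 * card (X \<inter> Y))" by simp
  thus ?thesis by (simp add: power_add power_mult)
qed

lemma sign_sdf_left:
  assumes "finite A" "finite B" "finite C"
  shows "cl_sign (sdf A B) C = cl_sign A C * cl_sign B C"
proof -
  have "invs (sdf A B) C = sdf (invs A C) (invs B C)" by (auto simp: invs_def)
  thus ?thesis using card_sdf_parity[OF finite_invs finite_invs] assms
    by (simp add: cl_sign_invs)
qed

lemma sign_sdf_right:
  assumes "finite A" "finite B" "finite C"
  shows "cl_sign A (sdf B C) = cl_sign A B * cl_sign A C"
proof -
  have "invs A (sdf B C) = sdf (invs A B) (invs A C)" by (auto simp: invs_def)
  thus ?thesis using card_sdf_parity[OF finite_invs finite_invs] assms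
    by (simp add: cl_sign_invs)
qed

lemma sign_sq: "cl_sign S T * cl_sign S T = 1"
  by (simp add: cl_sign_def flip: power_add mult_2)

abbreviation Pw :: "nat \<Rightarrow> nat set set" where "Pw n \<equiv> Pow {..n}"

lemma finite_Pw: "finite (Pw n)" by simp

lemma sdf_Pw: "S \<in> Pw n \<Longrightarrow> T \<in> Pw n \<Longrightarrow> sdf S T \<in> Pw n" by auto

lemma sdf_eq_iff: "sdf S T = U \<longleftrightarrow> T = sdf S U" by blast

lemma cl_mult_alt:
  "cl_mult n u v U = (if U \<in> Pw n then (\<Sum>S\<in>Pw n. cl_sign S (sdf S U) * u S * v (sdf S U)) else 0)"
proof -
  have "cl_mult n u v U = (\<Sum>S\<in>Pw n. (if sdf S U \<in> Pw n then cl_sign S (sdf S U) * u S * v (sdf S U) else 0))"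
    unfolding cl_mult_def
  proof (rule sum.cong[OF refl])
    fix S assume "S \<in> Pw n"
    have "(\<Sum>T\<in>Pw n. if sdf S T = U then cl_sign S T * u S * v T else 0)
        = (\<Sum>T\<in>Pw n. if T = sdf S U then cl_sign S T * u S * v T else 0)"
      by (rule sum.cong) (auto simp: sdf_eq_iff)
    also have "\<dots> = (if sdf S U \<in> Pw n then cl_sign S (sdf S U) * u S * v (sdf S U) else 0)"
      by (simp add: sum.delta' del: Pow_iff)
    finally show "(\<Sum>T\<in>Pw n. if sdf S T = U then cl_sign S T * u S * v T else 0) = \<dots>" .
  qed
  also have "\<dots> = (if U \<in> Pw n then (\<Sum>S\<in>Pw n. cl_sign S (sdf S U) * u S * v (sdf S U)) else 0)"
  proof (cases "U \<in> Pw n")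
    case True
    have "\<forall>S\<in>Pw n. sdf S U \<in> Pw n" using True by auto
    then show ?thesis using True by (simp del: Pow_iff)
  next
    case False
    have "\<And>S. S \<in> Pw n \<Longrightarrow> sdf S U \<notin> Pw n" using False by auto
    then show ?thesis using False by (simp del: Pow_iff)
  qed
  finally show ?thesis .
qed

lemma cl_mult_sum_left:
  "cl_mult n (\<lambda>U. \<Sum>k\<in>K. f k U) w V = (\<Sum>k\<in>K. cl_mult n (f k) w V)"
  by (simp add: cl_mult_alt sum_distrib_left sum_distrib_right algebra_simps sum.swap[of _ K] del: Pow_iff)

lemma cl_mult_sum_right:
  "cl_mult n w (\<lambda>U. \<Sum>k\<in>K. f k U) V = (\<Sum>k\<in>K. cl_mult n w (f k) V)"
  by (simp add: cl_mult_alt sum_distrib_left sum_distrib_right algebra_simps sum.swap[of _ K] del: Pow_iff)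

lemma cl_mult_scale_left: "cl_mult n (\<lambda>U. a * f U) w V = a * cl_mult n f w V"
  by (simp add: cl_mult_alt sum_distrib_left algebra_simps del: Pow_iff)

lemma cl_mult_scale_right: "cl_mult n w (\<lambda>U. a * f U) V = a * cl_mult n w f V"
  by (simp add: cl_mult_alt sum_distrib_left algebra_simps del: Pow_iff)

lemma cl_mult_add_left: "cl_mult n (\<lambda>U. f U + g U) w V = cl_mult n f w V + cl_mult n g w V"
  by (simp add: cl_mult_alt sum.distrib algebra_simps del: Pow_iff)

lemma cl_mult_add_right: "cl_mult n w (\<lambda>U. f U + g U) V = cl_mult n w f V + cl_mult n w g V"
  by (simp add: cl_mult_alt sum.distrib algebra_simps del: Pow_iff)

lemma cl_mult_zero_right: "cl_mult n w (\<lambda>U. 0) V = 0"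
  by (simp add: cl_mult_alt del: Pow_iff)

lemma cl_mult_zero_left: "cl_mult n (\<lambda>U. 0) w V = 0"
  by (simp add: cl_mult_alt del: Pow_iff)

lemma cl_mult_basis_left:
  assumes "A \<in> Pw n"
  shows "cl_mult n (cl_basis A) w U = (if U \<in> Pw n then cl_sign A (sdf A U) * w (sdf A U) else 0)"
  using assms by (simp add: cl_mult_alt cl_basis_def if_distrib[of "\<lambda>z. z * _"] if_distrib[of "\<lambda>z. _ * z"] sum.delta' cong: if_cong del: Pow_iff)

lemma cl_mult_expand_left:
  "cl_mult n u v V = (\<Sum>S\<in>Pw n. u S * cl_mult n (cl_basis S) v V)"
proof -
  have "(\<Sum>S\<in>Pw n. u S * cl_mult n (cl_basis S) v V)
      = (\<Sum>S\<in>Pw n. u S * (if V \<in> Pw n then cl_sign S (sdf S V) * v (sdf S V) else 0))"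
    by (intro sum.cong refl) (simp add: cl_mult_basis_left del: Pow_iff)
  thus ?thesis by (simp add: cl_mult_alt algebra_simps del: Pow_iff)
qed

lemma cl_mult_elems: "cl_mult n u v \<in> cl_elems n"
  by (auto simp: cl_elems_def cl_mult_alt)

lemma cl_mult_one_left:
  assumes "w \<in> cl_elems n"
  shows "cl_mult n (cl_basis {}) w = w"
proof
  fix U show "cl_mult n (cl_basis {}) w U = w U"
    using assms by (auto simp: cl_mult_basis_left cl_sign_def cl_elems_def)
qed

lemma cl_basis_elems: "S \<in> Pw n \<Longrightarrow> cl_basis S \<in> cl_elems n"
  by (auto simp: cl_basis_def cl_elems_def)

lemma cocycle:
  assumes "finite S" "finite T" "finite U"
  shows "cl_sign (sdf S T) (sdf (sdf S T) U) * cl_sign S T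
       = cl_sign S (sdf S U) * cl_sign T (sdf T (sdf S U))"
proof -
  define C where "C = sdf T (sdf S U)"
  have C1: "sdf (sdf S T) U = C" unfolding C_def by blast
  have C2: "sdf S U = sdf T C" unfolding C_def by blast
  have fC: "finite C" using assms unfolding C_def by auto
  show ?thesis unfolding C1 C2 C_def[symmetric]
    using assms fC by (simp add: sign_sdf_left sign_sdf_right sign_sq)
qed

lemma sdf_sdf [simp]: "sdf S (sdf S T) = T" by blast

lemma Pw_finite: "S \<in> Pw n \<Longrightarrow> finite S"
  by (meson PowD finite_atMost finite_subset)

lemma sum_Pw_reindex:
  assumes "S \<in> Pw n"
  shows "(\<Sum>A\<in>Pw n. g A) = (\<Sum>T\<in>Pw n. g (sdf S T))"
  by (rule sum.reindex_bij_witness[where i="sdf S" and j="sdf S"]) (use assms in auto)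

lemma cl_mult_assoc: "cl_mult n (cl_mult n u v) w = cl_mult n u (cl_mult n v w)"
proof
  fix U
  show "cl_mult n (cl_mult n u v) w U = cl_mult n u (cl_mult n v w) U"
  proof (cases "U \<in> Pw n")
    case False thus ?thesis by (simp add: cl_mult_alt del: Pow_iff)
  next
    case True
    have "cl_mult n (cl_mult n u v) w U =
       (\<Sum>A\<in>Pw n. \<Sum>S\<in>Pw n. cl_sign A (sdf A U) * cl_sign S (sdf S A) * u S * v (sdf S A) * w (sdf A U))"
      using True
      by (simp add: cl_mult_alt sum_distrib_left sum_distrib_right algebra_simps del: Pow_iff cong: if_cong)
    also have "\<dots> = (\<Sum>S\<in>Pw n. \<Sum>A\<in>Pw n. cl_sign A (sdf A U) * cl_sign S (sdf S A) * u S * v (sdf S A) * w (sdf A U))"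
      by (rule sum.swap)
    also have "\<dots> = (\<Sum>S\<in>Pw n. \<Sum>T\<in>Pw n. cl_sign (sdf S T) (sdf (sdf S T) U) * cl_sign S T * u S * v T * w (sdf (sdf S T) U))"
    proof (rule sum.cong[OF refl])
      fix S assume S: "S \<in> Pw n"
      have e: "\<And>T. sdf S (sdf S T) = T" by blast
      show "(\<Sum>A\<in>Pw n. cl_sign A (sdf A U) * cl_sign S (sdf S A) * u S * v (sdf S A) * w (sdf A U))
          = (\<Sum>T\<in>Pw n. cl_sign (sdf S T) (sdf (sdf S T) U) * cl_sign S T * u S * v T * w (sdf (sdf S T) U))"
        by (subst sum_Pw_reindex[OF S]) (simp only: e)
    qed
    also have "\<dots> = (\<Sum>S\<in>Pw n. \<Sum>T\<in>Pw n. cl_sign S (sdf S U) * cl_sign T (sdf T (sdf S U)) * u S * v T * w (sdf T (sdf S U)))"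
    proof (intro sum.cong refl)
      fix S T assume S: "S \<in> Pw n" and T: "T \<in> Pw n"
      have fin: "finite S" "finite T" "finite U" using S T True Pw_finite by auto
      have e: "sdf (sdf S T) U = sdf T (sdf S U)" by blast
      show "cl_sign (sdf S T) (sdf (sdf S T) U) * cl_sign S T * u S * v T * w (sdf (sdf S T) U)
          = cl_sign S (sdf S U) * cl_sign T (sdf T (sdf S U)) * u S * v T * w (sdf T (sdf S U))"
        using cocycle[OF fin] unfolding e by simp
    qed
    also have "\<dots> = cl_mult n u (cl_mult n v w) U"
      using True
      by (simp add: cl_mult_alt sum_distrib_left sum_distrib_right algebra_simps sdf_Pw del: Pow_iff cong: if_cong)
    finally show ?thesis .
  qed
qed

definition ip :: "nat \<Rightarrow> cl \<Rightarrow> cl \<Rightarrow> real" where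
  "ip n u v = (\<Sum>S\<in>Pw n. u S * v S)"

lemma cl_tr_eq: "cl_tr n w = 2 ^ Suc n * w {}"
proof -
  have "\<And>S. S \<in> Pw n \<Longrightarrow> cl_mult n w (cl_basis S) S = w {}"
  proof -
    fix S assume S: "S \<in> Pw n"
    have "cl_mult n w (cl_basis S) S = (\<Sum>A\<in>Pw n. cl_sign A (sdf A S) * w A * cl_basis S (sdf A S))"
      using S by (simp add: cl_mult_alt del: Pow_iff)
    also have "\<dots> = (\<Sum>A\<in>Pw n. if A = {} then w A else 0)"
    proof (rule sum.cong[OF refl])
      fix A
      have e: "sdf A S = S \<longleftrightarrow> A = {}" by blast
      show "cl_sign A (sdf A S) * w A * cl_basis S (sdf A S) = (if A = {} then w A else 0)"
        by (simp add: cl_basis_def e cl_sign_def)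
    qed
    also have "\<dots> = w {}" by simp
    finally show "cl_mult n w (cl_basis S) S = w {}" .
  qed
  hence "cl_tr n w = (\<Sum>S\<in>Pw n. w {})" unfolding cl_tr_def by (intro sum.cong) auto
  also have "\<dots> = 2 ^ Suc n * w {}" by (simp add: card_Pow)
  finally show ?thesis .
qed

lemma card_invs_self: "finite S \<Longrightarrow> 2 * card (invs S S) = card S * (card S - 1)"
proof (induction S rule: finite_linorder_max_induct)
  case empty thus ?case by (simp add: invs_def)
next
  case (insert b A)
  have e: "invs (insert b A) (insert b A) = invs A A \<union> (\<lambda>j. (b, j)) ` A"
    using insert.hyps by (auto simp: invs_def)
  have d: "invs A A \<inter> (\<lambda>j. (b, j)) ` A = {}" using insert.hyps by (auto simp: invs_def)
  have c: "card (invs (insert b A) (insert b A)) = card (invs A A) + card A"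
    unfolding e using d insert.hyps
    by (subst card_Un_disjoint) (auto simp: finite_invs card_image inj_on_def)
  have bA: "b \<notin> A" using insert.hyps by auto
  show ?case unfolding c using insert.IH insert.hyps bA
    by (cases "card A") (auto simp: algebra_simps)
qed

lemma sign_self_rev: "finite S \<Longrightarrow> cl_sign S S * (-1) ^ (card S * (card S - 1) div 2) = 1"
proof -
  assume f: "finite S"
  have "card (invs S S) = card S * (card S - 1) div 2" using card_invs_self[OF f] by simp
  thus ?thesis by (simp add: cl_sign_invs flip: power_add mult_2)
qed

lemma cl_beta_eq: "cl_beta n u v = 2 ^ Suc n * ip n u v"
proof -
  have "cl_mult n (cl_rev u) v {} = (\<Sum>S\<in>Pw n. cl_sign S S * cl_rev u S * v S)"
    by (simp add: cl_mult_alt)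
  also have "\<dots> = ip n u v"
    unfolding ip_def
  proof (intro sum.cong refl)
    fix S assume S: "S \<in> Pw n"
    show "cl_sign S S * cl_rev u S * v S = u S * v S"
      using sign_self_rev[OF Pw_finite[OF S]] unfolding cl_rev_def
      by (metis (no_types, lifting) mult.assoc mult_1)
  qed
  finally have "cl_mult n (cl_rev u) v {} = ip n u v" .
  thus ?thesis by (simp add: cl_beta_def cl_tr_eq)
qed

lemma invs_single: "invs {i} (sdf {i} T) = invs {i} T"
  by (auto simp: invs_def)

lemma ip_basis_mult:
  assumes "i \<le> n"
  shows "ip n (cl_mult n (cl_basis {i}) w) v = ip n w (cl_mult n (cl_basis {i}) v)"
proof -
  have i: "{i} \<in> Pw n" using assms by auto
  have "ip n (cl_mult n (cl_basis {i}) w) v = (\<Sum>U\<in>Pw n. cl_sign {i} (sdf {i} U) * w (sdf {i} U) * v U)"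
    unfolding ip_def by (intro sum.cong refl) (simp add: cl_mult_basis_left[OF i] del: Pow_iff)
  also have "\<dots> = (\<Sum>T\<in>Pw n. cl_sign {i} T * w T * v (sdf {i} T))"
    by (subst sum_Pw_reindex[OF i]) simp
  also have "\<dots> = ip n w (cl_mult n (cl_basis {i}) v)"
    unfolding ip_def
    by (intro sum.cong refl) (simp add: cl_mult_basis_left[OF i] cl_sign_invs invs_single del: Pow_iff)
  finally show ?thesis .
qed

lemma xvec_mult: "cl_mult n (cl_xvec n x) w V = (\<Sum>i\<le>n. x i * cl_mult n (cl_basis {i}) w V)"
  unfolding cl_xvec_def by (simp add: cl_mult_sum_left cl_mult_scale_left)

lemma ip_xvec: "ip n (cl_mult n (cl_xvec n x) w) v = ip n w (cl_mult n (cl_xvec n x) v)"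
proof -
  have "ip n (cl_mult n (cl_xvec n x) w) v = (\<Sum>i\<le>n. x i * ip n (cl_mult n (cl_basis {i}) w) v)"
    unfolding ip_def xvec_mult by (simp add: sum_distrib_left sum_distrib_right algebra_simps sum.swap[of _ "{..n}"] del: Pow_iff)
  also have "\<dots> = (\<Sum>i\<le>n. x i * ip n w (cl_mult n (cl_basis {i}) v))"
    by (intro sum.cong refl) (simp add: ip_basis_mult)
  also have "\<dots> = ip n w (cl_mult n (cl_xvec n x) v)"
    unfolding ip_def xvec_mult by (simp add: sum_distrib_left sum_distrib_right algebra_simps sum.swap[of _ "{..n}"] del: Pow_iff)
  finally show ?thesis .
qed

lemma basis_basis:
  assumes "i \<le> n" "j \<le> n"
  shows "cl_mult n (cl_basis {i}) (cl_basis {j}) V = (if sdf {i} {j} = V then cl_sign {i} {j} else 0)"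
proof -
  have i: "{i} \<in> Pw n" using assms by auto
  have e: "sdf {i} V = {j} \<longleftrightarrow> sdf {i} {j} = V" by blast
  have p: "sdf {i} {j} \<in> Pw n" using assms by auto
  show ?thesis
  proof (cases "sdf {i} {j} = V")
    case True
    hence h: "sdf {i} V = {j}" by blast
    have V: "V \<in> Pw n" using p True by simp
    have "cl_mult n (cl_basis {i}) (cl_basis {j}) V = (if V \<in> Pw n then cl_sign {i} (sdf {i} V) * cl_basis {j} (sdf {i} V) else 0)"
      by (rule cl_mult_basis_left[OF i])
    also have "\<dots> = cl_sign {i} {j}" by (simp only: h V if_True cl_basis_def) simp
    finally show ?thesis using True by simp
  next
    case False thus ?thesis unfolding cl_mult_basis_left[OF i] by (simp add: cl_basis_def e del: Pow_iff)
  qed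
qed

lemma sign_single_self: "cl_sign {i} {i} = 1"
proof -
  have "{(a, b). a \<in> {i} \<and> b \<in> {i} \<and> b < a} = {}" by auto
  thus ?thesis by (simp only: cl_sign_def) simp
qed

lemma sign_single_anti: "i \<noteq> j \<Longrightarrow> cl_sign {i} {j} = - cl_sign {j} {i}"
proof -
  assume ij: "i \<noteq> j"
  have "invs {i} {j} = (if j < i then {(i, j)} else {})" "invs {j} {i} = (if i < j then {(j, i)} else {})"
    by (auto simp: invs_def)
  thus ?thesis using ij by (auto simp: cl_sign_invs)
qed

lemma xx:
  assumes "x \<in> sphere_pts n"
  shows "cl_mult n (cl_xvec n x) (cl_xvec n x) = cl_basis {}"
proof
  fix V
  define g where "g i j = (if sdf {i} {j} = V then cl_sign {i} {j} else (0::real))" for i j :: nat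
  have "cl_mult n (cl_xvec n x) (cl_xvec n x) V = (\<Sum>i\<le>n. \<Sum>j\<le>n. x i * (x j * g i j))"
    unfolding xvec_mult
    by (intro sum.cong refl) (simp add: cl_xvec_def cl_mult_sum_right cl_mult_scale_right basis_basis g_def sum_distrib_left)
  also have "\<dots> = cl_basis {} V"
  proof (cases "V = {}")
    case True
    have "\<And>i j. g i j = (if j = i then 1 else 0)"
      using True by (auto simp: g_def sign_single_self)
    hence "(\<Sum>i\<le>n. \<Sum>j\<le>n. x i * (x j * g i j)) = (\<Sum>i\<le>n. (x i)^2)"
      by (simp add: if_distrib[of "\<lambda>z. _ * z"] sum.delta power2_eq_square cong: if_cong)
    also have "\<dots> = 1" using assms by (simp add: sphere_pts_def)
    finally show ?thesis using True by (simp add: cl_basis_def)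
  next
    case False
    have anti: "g j i = - g i j" for i j
    proof (cases "i = j")
      case True
      have "sdf {i} {i} \<noteq> V" using False by blast
      thus ?thesis using True by (simp add: g_def)
    next
      case ne: False
      have s: "cl_sign {j} {i} = - cl_sign {i} {j}" using sign_single_anti[of j i] ne by auto
      have c: "sdf {j} {i} = sdf {i} {j}" by blast
      show ?thesis unfolding g_def c s by simp
    qed
    define T where "T = (\<Sum>i\<le>n. \<Sum>j\<le>n. x i * (x j * g i j))"
    have "T = (\<Sum>j\<le>n. \<Sum>i\<le>n. x i * (x j * g i j))" unfolding T_def by (rule sum.swap)
    also have "\<dots> = - T" unfolding T_def sum_negf[symmetric]
    proof (intro sum.cong refl)
      fix a b
      have "g b a = - g a b" by (rule anti)
      thus "x b * (x a * g b a) = - (x a * (x b * g a b))" by simp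
    qed
    finally have "T = 0" by simp
    thus ?thesis using False by (simp add: T_def cl_basis_def)
  qed
  finally show "cl_mult n (cl_xvec n x) (cl_xvec n x) V = cl_basis {} V" .
qed

lemma xxw:
  assumes "x \<in> sphere_pts n" "w \<in> cl_elems n"
  shows "cl_mult n (cl_xvec n x) (cl_mult n (cl_xvec n x) w) = w"
  using assms by (simp add: cl_mult_assoc[symmetric] xx cl_mult_one_left)



lemma An_I:
  assumes "p \<in> polyfun n" "\<And>x. x \<in> sphere_pts n \<Longrightarrow> f x = p x" "\<And>x. x \<notin> sphere_pts n \<Longrightarrow> f x = 0"
  shows "f \<in> An n"
  unfolding An_def using assms by auto

lemma An_off: "f \<in> An n \<Longrightarrow> x \<notin> sphere_pts n \<Longrightarrow> f x = 0"
  unfolding An_def by auto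

lemma An_poly: "f \<in> An n \<Longrightarrow> \<exists>p\<in>polyfun n. \<forall>x\<in>sphere_pts n. f x = p x"
  unfolding An_def by auto

lemma An_add: "f \<in> An n \<Longrightarrow> g \<in> An n \<Longrightarrow> (\<lambda>x. f x + g x) \<in> An n"
proof -
  assume f: "f \<in> An n" and g: "g \<in> An n"
  obtain p where p: "p \<in> polyfun n" "\<forall>x\<in>sphere_pts n. f x = p x" using An_poly[OF f] by blast
  obtain q where q: "q \<in> polyfun n" "\<forall>x\<in>sphere_pts n. g x = q x" using An_poly[OF g] by blast
  show ?thesis
    by (rule An_I[OF polyfun.pf_add[OF p(1) q(1)]]) (use p q An_off[OF f] An_off[OF g] in auto)
qed

lemma An_mult: "f \<in> An n \<Longrightarrow> g \<in> An n \<Longrightarrow> (\<lambda>x. f x * g x) \<in> An n"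
proof -
  assume f: "f \<in> An n" and g: "g \<in> An n"
  obtain p where p: "p \<in> polyfun n" "\<forall>x\<in>sphere_pts n. f x = p x" using An_poly[OF f] by blast
  obtain q where q: "q \<in> polyfun n" "\<forall>x\<in>sphere_pts n. g x = q x" using An_poly[OF g] by blast
  show ?thesis
    by (rule An_I[OF polyfun.pf_mult[OF p(1) q(1)]]) (use p q An_off[OF f] An_off[OF g] in auto)
qed

lemma An_zero: "(\<lambda>x. 0) \<in> An n"
  by (rule An_I[OF polyfun.pf_const[of 0]]) auto

lemma An_restrict: "p \<in> polyfun n \<Longrightarrow> (\<lambda>x. if x \<in> sphere_pts n then p x else 0) \<in> An n"
  by (rule An_I) auto

lemma An_sum: "finite K \<Longrightarrow> (\<forall>k\<in>K. f k \<in> An n) \<Longrightarrow> (\<lambda>x. \<Sum>k\<in>K. f k x) \<in> An n"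
proof (induction K rule: finite_induct)
  case empty thus ?case by (simp add: An_zero)
next
  case (insert k K)
  thus ?case using An_add[of "f k" n "\<lambda>x. \<Sum>k\<in>K. f k x"] by simp
qed

lemma pf_sum: "finite K \<Longrightarrow> (\<forall>k\<in>K. f k \<in> polyfun n) \<Longrightarrow> (\<lambda>x. \<Sum>k\<in>K. f k x) \<in> polyfun n"
proof (induction K rule: finite_induct)
  case empty thus ?case using polyfun.pf_const[of 0] by simp
next
  case (insert k K)
  thus ?case using polyfun.pf_add[of "f k" n "\<lambda>x. \<Sum>k\<in>K. f k x"] by simp
qed

lemma pf_affine: "(\<lambda>x. (A - (\<Sum>i\<le>n. x i * K i)) / D) \<in> polyfun n"
proof -
  have s: "(\<lambda>x. \<Sum>i\<le>n. x i * K i) \<in> polyfun n"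
    by (rule pf_sum) (auto intro: polyfun.pf_mult polyfun.pf_var polyfun.pf_const)
  have "(\<lambda>x. (1/D) * (A + (-1) * (\<Sum>i\<le>n. x i * K i))) \<in> polyfun n"
    by (intro polyfun.pf_mult polyfun.pf_add polyfun.pf_const s)
  moreover have "(\<lambda>x. (1/D) * (A + (-1) * (\<Sum>i\<le>n. x i * K i))) = (\<lambda>x. (A - (\<Sum>i\<le>n. x i * K i)) / D)"
    by (auto simp: divide_inverse algebra_simps)
  ultimately show ?thesis by simp
qed

lemma E_elems: "u \<in> cl_E n e \<Longrightarrow> u \<in> cl_elems n"
  unfolding cl_E_def using cl_mult_elems by auto

lemma E_lin:
  assumes "u \<in> cl_E n e" "v \<in> cl_E n e"
  shows "(\<lambda>U. a * u U + b * v U) \<in> cl_E n e"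
proof -
  obtain u0 where u0: "u0 \<in> cl_elems n" "u = cl_mult n u0 e" using assms(1) unfolding cl_E_def by auto
  obtain v0 where v0: "v0 \<in> cl_elems n" "v = cl_mult n v0 e" using assms(2) unfolding cl_E_def by auto
  have "(\<lambda>S. a * u0 S + b * v0 S) \<in> cl_elems n" using u0 v0 by (auto simp: cl_elems_def)
  moreover have "(\<lambda>U. a * u U + b * v U) = cl_mult n (\<lambda>S. a * u0 S + b * v0 S) e"
    by (rule ext) (simp add: u0 v0 cl_mult_add_left cl_mult_scale_left)
  ultimately show ?thesis unfolding cl_E_def by blast
qed

lemma E_zero: "(\<lambda>U. 0) \<in> cl_E n e"
proof -
  have "(\<lambda>S. 0) \<in> cl_elems n" by (auto simp: cl_elems_def)
  moreover have "(\<lambda>U. 0) = cl_mult n (\<lambda>S. 0) e" by (rule ext) (simp add: cl_mult_zero_left)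
  ultimately show ?thesis unfolding cl_E_def by blast
qed

lemma E_left: "u \<in> cl_E n e \<Longrightarrow> cl_mult n w u \<in> cl_E n e"
proof -
  assume "u \<in> cl_E n e"
  then obtain u0 where u0: "u0 \<in> cl_elems n" "u = cl_mult n u0 e" unfolding cl_E_def by auto
  have "cl_mult n w u = cl_mult n (cl_mult n w u0) e" using u0 by (simp add: cl_mult_assoc)
  thus ?thesis unfolding cl_E_def using cl_mult_elems by blast
qed

lemma E_basis: "S \<in> Pw n \<Longrightarrow> cl_mult n (cl_basis S) e \<in> cl_E n e"
  unfolding cl_E_def using cl_basis_elems by blast

lemma E_sum: "finite K \<Longrightarrow> (\<forall>k\<in>K. w k \<in> cl_E n e) \<Longrightarrow> (\<lambda>U. \<Sum>k\<in>K. a k * w k U) \<in> cl_E n e"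
proof (induction K rule: finite_induct)
  case empty thus ?case by (simp add: E_zero)
next
  case (insert k K)
  hence "(\<lambda>U. a k * w k U + 1 * (\<Sum>k\<in>K. a k * w k U)) \<in> cl_E n e"
    by (intro E_lin) auto
  thus ?case using insert by simp
qed

lemma E_idem:
  assumes "cl_mult n e e = e" "u \<in> cl_E n e"
  shows "cl_mult n u e = u"
  using assms unfolding cl_E_def by (auto simp: cl_mult_assoc)

subsection \<open>The projection (1 - x)/2\<close>

definition half :: "nat \<Rightarrow> pt \<Rightarrow> cl \<Rightarrow> cl" where
  "half n x w = (\<lambda>U. (w U - cl_mult n (cl_xvec n x) w U) / 2)"

lemma half_alt: "half n x w = (\<lambda>U. (1/2) * w U + (-1/2) * cl_mult n (cl_xvec n x) w U)"
  unfolding half_def by (rule ext) (simp add: field_simps)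

lemma half_E: "w \<in> cl_E n e \<Longrightarrow> half n x w \<in> cl_E n e"
  unfolding half_alt by (intro E_lin E_left)

lemma half_x:
  assumes "x \<in> sphere_pts n" "w \<in> cl_elems n"
  shows "cl_mult n (cl_xvec n x) (half n x w) = (\<lambda>U. - half n x w U)"
  unfolding half_alt
proof (rule ext)
  fix U
  let ?X = "cl_xvec n x"
  have "cl_mult n ?X (\<lambda>U. (1/2) * w U + (-1/2) * cl_mult n ?X w U) U
      = (1/2) * cl_mult n ?X w U + (-1/2) * cl_mult n ?X (cl_mult n ?X w) U"
    by (simp only: cl_mult_add_right cl_mult_scale_right)
  thus "cl_mult n ?X (\<lambda>U. (1/2) * w U + (-1/2) * cl_mult n ?X w U) U
      = - ((1/2) * w U + (-1/2) * cl_mult n ?X w U)"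
    using xxw[OF assms] by simp
qed

lemma half_poly: "(\<lambda>x. if x \<in> sphere_pts n then half n x w U / D else 0) \<in> An n"
proof -
  have "(\<lambda>x. if x \<in> sphere_pts n then half n x w U / D else 0)
      = (\<lambda>x. if x \<in> sphere_pts n then (w U - (\<Sum>i\<le>n. x i * cl_mult n (cl_basis {i}) w U)) / (2 * D) else 0)"
    by (rule ext) (simp add: half_def xvec_mult)
  thus ?thesis using An_restrict[OF pf_affine] by simp
qed

lemma half_sum: "half n x (\<lambda>U. \<Sum>k\<in>K. a k * w k U) V = (\<Sum>k\<in>K. a k * half n x (w k) V)"
  unfolding half_def
  by (simp add: cl_mult_sum_right cl_mult_scale_right sum_divide_distrib[symmetric]
      sum_subtractf[symmetric] right_diff_distrib)

lemma ip_half: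
  assumes "cl_mult n (cl_xvec n x) g = (\<lambda>U. - g U)"
  shows "ip n (half n x w) g = ip n w g"
proof -
  have "ip n (cl_mult n (cl_xvec n x) w) g = - ip n w g"
    unfolding ip_xvec assms by (simp add: ip_def sum_negf[symmetric])
  moreover have "ip n (half n x w) g = (ip n w g - ip n (cl_mult n (cl_xvec n x) w) g) / 2"
    unfolding half_def ip_def
    by (simp add: sum_divide_distrib[symmetric] sum_subtractf[symmetric] left_diff_distrib)
  ultimately show ?thesis by simp
qed



subsection \<open>The module P_n\<close>

lemma Pn_AE: "F \<in> Pn n e \<Longrightarrow> F \<in> AEmod n e"
  unfolding Pn_def by auto

lemma Pn_off: "F \<in> Pn n e \<Longrightarrow> x \<notin> sphere_pts n \<Longrightarrow> F x = (\<lambda>S. 0)"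
  unfolding Pn_def AEmod_def by auto

lemma Pn_comp: "F \<in> Pn n e \<Longrightarrow> (\<lambda>x. F x S) \<in> An n"
  unfolding Pn_def AEmod_def by auto

lemma Pn_E: "F \<in> Pn n e \<Longrightarrow> F x \<in> cl_E n e"
  unfolding Pn_def AEmod_def by auto

lemma Pn_x: "F \<in> Pn n e \<Longrightarrow> cl_mult n (cl_xvec n x) (F x) = (\<lambda>U. - F x U)"
proof
  fix U assume F: "F \<in> Pn n e"
  hence "Phi n F x U = 0" unfolding Pn_def by auto
  thus "cl_mult n (cl_xvec n x) (F x) U = - F x U" unfolding Phi_def by simp
qed

lemma Pn_half: "F \<in> Pn n e \<Longrightarrow> half n x (F x) = F x"
  unfolding half_def using Pn_x by (auto simp: fun_eq_iff)

lemma PnI: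
  assumes "\<And>x. x \<notin> sphere_pts n \<Longrightarrow> F x = (\<lambda>S. 0)"
    "\<And>S. (\<lambda>x. F x S) \<in> An n" "\<And>x. F x \<in> cl_E n e"
    "\<And>x. x \<in> sphere_pts n \<Longrightarrow> cl_mult n (cl_xvec n x) (F x) = (\<lambda>U. - F x U)"
  shows "F \<in> Pn n e"
proof -
  have "Phi n F = (\<lambda>x S. 0)"
  proof (intro ext)
    fix x S show "Phi n F x S = 0"
    proof (cases "x \<in> sphere_pts n")
      case True thus ?thesis using assms(4)[OF True] by (simp add: Phi_def)
    next
      case False thus ?thesis using assms(1)[OF False] by (simp add: Phi_def cl_mult_zero_right)
    qed
  qed
  thus ?thesis using assms unfolding Pn_def AEmod_def by auto
qed

lemma Pn_zero: "(\<lambda>x S. 0) \<in> Pn n e"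
  by (rule PnI) (auto simp: An_zero E_zero cl_mult_zero_right)

lemma Pn_add: "F \<in> Pn n e \<Longrightarrow> G \<in> Pn n e \<Longrightarrow> ae_add F G \<in> Pn n e"
  unfolding ae_add_def
proof (rule PnI)
  fix x S
  assume F: "F \<in> Pn n e" and G: "G \<in> Pn n e"
  show "x \<notin> sphere_pts n \<Longrightarrow> (\<lambda>S. F x S + G x S) = (\<lambda>S. 0)" using Pn_off[OF F] Pn_off[OF G] by auto
  show "(\<lambda>x. F x S + G x S) \<in> An n" using An_add[OF Pn_comp[OF F] Pn_comp[OF G]] .
  show "(\<lambda>S. F x S + G x S) \<in> cl_E n e" using E_lin[OF Pn_E[OF F] Pn_E[OF G], where a=1 and b=1] by simp
  show "cl_mult n (cl_xvec n x) (\<lambda>S. F x S + G x S) = (\<lambda>U. - (F x U + G x U))"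
    by (rule ext) (simp add: cl_mult_add_right Pn_x[OF F] Pn_x[OF G])
qed

lemma Pn_smul: "a \<in> An n \<Longrightarrow> F \<in> Pn n e \<Longrightarrow> ae_smul a F \<in> Pn n e"
  unfolding ae_smul_def
proof (rule PnI)
  fix x S
  assume a: "a \<in> An n" and F: "F \<in> Pn n e"
  show "x \<notin> sphere_pts n \<Longrightarrow> (\<lambda>S. a x * F x S) = (\<lambda>S. 0)" using Pn_off[OF F] by auto
  show "(\<lambda>x. a x * F x S) \<in> An n" using An_mult[OF a Pn_comp[OF F]] .
  show "(\<lambda>S. a x * F x S) \<in> cl_E n e" using E_lin[OF Pn_E[OF F] Pn_E[OF F], where a="a x" and b=0] by simp
  show "cl_mult n (cl_xvec n x) (\<lambda>S. a x * F x S) = (\<lambda>U. - (a x * F x U))"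
    by (rule ext) (simp add: cl_mult_scale_right Pn_x[OF F])
qed

lemma Pn_sum:
  "finite K \<Longrightarrow> (\<forall>k\<in>K. a k \<in> An n \<and> G k \<in> Pn n e) \<Longrightarrow> (\<lambda>x U. \<Sum>k\<in>K. a k x * G k x U) \<in> Pn n e"
proof (induction K rule: finite_induct)
  case empty thus ?case by (simp add: Pn_zero)
next
  case (insert k K)
  hence "ae_add (ae_smul (a k) (G k)) (\<lambda>x U. \<Sum>k\<in>K. a k x * G k x U) \<in> Pn n e"
    by (intro Pn_add Pn_smul) auto
  thus ?case using insert by (simp add: ae_add_def ae_smul_def)
qed

lemma phi_zero:
  assumes "An_linear_form n (Pn n e) \<phi>"
  shows "\<phi> (\<lambda>x S. 0) = (\<lambda>x. 0)"
proof -
  have "ae_add (\<lambda>x S. 0) (\<lambda>x S. 0) = (\<lambda>x S. 0)" by (simp add: ae_add_def)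
  hence "\<phi> (\<lambda>x S. 0) = (\<lambda>x. \<phi> (\<lambda>x S. 0) x + \<phi> (\<lambda>x S. 0) x)"
    using assms Pn_zero unfolding An_linear_form_def by metis
  thus ?thesis by (metis add_cancel_left_left ext)
qed

lemma phi_sum:
  assumes phi: "An_linear_form n (Pn n e) \<phi>"
  shows "finite K \<Longrightarrow> (\<forall>k\<in>K. a k \<in> An n \<and> G k \<in> Pn n e) \<Longrightarrow>
     \<phi> (\<lambda>x U. \<Sum>k\<in>K. a k x * G k x U) = (\<lambda>x. \<Sum>k\<in>K. a k x * \<phi> (G k) x)"
proof (induction K rule: finite_induct)
  case empty thus ?case using phi_zero[OF phi] by simp
next
  case (insert k K)
  have e: "(\<lambda>x U. \<Sum>k\<in>insert k K. a k x * G k x U) = ae_add (ae_smul (a k) (G k)) (\<lambda>x U. \<Sum>k\<in>K. a k x * G k x U)"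
    using insert by (simp add: ae_add_def ae_smul_def)
  have s: "ae_smul (a k) (G k) \<in> Pn n e" using insert by (intro Pn_smul) auto
  have r: "(\<lambda>x U. \<Sum>k\<in>K. a k x * G k x U) \<in> Pn n e" using insert by (intro Pn_sum) auto
  have "\<phi> (\<lambda>x U. \<Sum>k\<in>insert k K. a k x * G k x U)
      = (\<lambda>x. \<phi> (ae_smul (a k) (G k)) x + \<phi> (\<lambda>x U. \<Sum>k\<in>K. a k x * G k x U) x)"
    unfolding e using phi s r unfolding An_linear_form_def by blast
  also have "\<phi> (ae_smul (a k) (G k)) = (\<lambda>x. a k x * \<phi> (G k) x)"
    using phi insert.prems unfolding An_linear_form_def by auto
  finally show ?case using insert by simp
qed

definition Bv :: "nat \<Rightarrow> cl \<Rightarrow> nat set \<Rightarrow> aeel" where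
  "Bv n e S = (\<lambda>x. if x \<in> sphere_pts n then half n x (cl_mult n (cl_basis S) e) else (\<lambda>U. 0))"

lemma Bv_Pn:
  assumes "S \<in> Pw n"
  shows "Bv n e S \<in> Pn n e"
proof (rule PnI)
  fix x U
  show "x \<notin> sphere_pts n \<Longrightarrow> Bv n e S x = (\<lambda>S. 0)" by (simp add: Bv_def)
  have "(\<lambda>x. Bv n e S x U) = (\<lambda>x. if x \<in> sphere_pts n then half n x (cl_mult n (cl_basis S) e) U / 1 else 0)"
    by (auto simp: Bv_def)
  thus "(\<lambda>x. Bv n e S x U) \<in> An n" using half_poly by simp
  show "Bv n e S x \<in> cl_E n e" using half_E[OF E_basis[OF assms]] E_zero by (simp add: Bv_def)
  show "x \<in> sphere_pts n \<Longrightarrow> cl_mult n (cl_xvec n x) (Bv n e S x) = (\<lambda>U. - Bv n e S x U)"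
    using half_x E_elems[OF E_basis[OF assms]] by (simp add: Bv_def)
qed

lemma Pn_decomp:
  assumes ee: "cl_mult n e e = e" and F: "F \<in> Pn n e"
  shows "F = (\<lambda>x U. \<Sum>S\<in>Pw n. F x S * Bv n e S x U)"
proof (intro ext)
  fix x U
  show "F x U = (\<Sum>S\<in>Pw n. F x S * Bv n e S x U)"
  proof (cases "x \<in> sphere_pts n")
    case False thus ?thesis using Pn_off[OF F] by (simp add: Bv_def)
  next
    case True
    have "(\<Sum>S\<in>Pw n. F x S * Bv n e S x U) = (\<Sum>S\<in>Pw n. F x S * half n x (cl_mult n (cl_basis S) e) U)"
      using True by (simp add: Bv_def)
    also have "\<dots> = half n x (\<lambda>V. \<Sum>S\<in>Pw n. F x S * cl_mult n (cl_basis S) e V) U"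
      by (rule half_sum[symmetric])
    also have "(\<lambda>V. \<Sum>S\<in>Pw n. F x S * cl_mult n (cl_basis S) e V) = cl_mult n (F x) e"
      by (rule ext) (simp add: cl_mult_expand_left[symmetric])
    also have "\<dots> = F x" by (rule E_idem[OF ee Pn_E[OF F]])
    also have "half n x (F x) U = F x U" using Pn_half[OF F] by simp
    finally show ?thesis ..
  qed
qed



subsection \<open>Orthogonal projection onto the span of a list\<close>

fun proj :: "nat \<Rightarrow> cl list \<Rightarrow> cl \<Rightarrow> cl" where
  "proj n [] u = (\<lambda>U. 0)"
| "proj n (v # vs) u = (\<lambda>U. proj n vs u U +
     ip n u (\<lambda>V. v V - proj n vs v V) / ip n (\<lambda>V. v V - proj n vs v V) (\<lambda>V. v V - proj n vs v V)
       * (v U - proj n vs v U))"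

lemma ip_sym: "ip n u v = ip n v u"
  unfolding ip_def by (simp add: mult.commute)

lemma ip_lin1: "ip n a (\<lambda>U. f U + c * (g U - h U)) = ip n a f + c * (ip n a g - ip n a h)"
proof -
  have "ip n a (\<lambda>U. f U + c * (g U - h U)) = (\<Sum>S\<in>Pw n. a S * f S + c * (a S * g S - a S * h S))"
    unfolding ip_def by (rule sum.cong) (auto simp: algebra_simps)
  also have "\<dots> = ip n a f + c * (ip n a g - ip n a h)"
    unfolding ip_def by (simp add: sum.distrib sum_distrib_left[symmetric] sum_subtractf)
  finally show ?thesis .
qed

lemma ip_lin2: "ip n (\<lambda>U. u U - (f U + c * g U)) y = ip n u y - ip n f y - c * ip n g y"
  unfolding ip_def by (simp add: sum.distrib sum_distrib_left sum_subtractf[symmetric] algebra_simps)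

lemma ip_diff: "ip n (\<lambda>U. f U - g U) y = ip n f y - ip n g y"
  unfolding ip_def by (simp add: sum_subtractf[symmetric] algebra_simps)

lemma ip_diff_right: "ip n y (\<lambda>U. f U - g U) = ip n y f - ip n y g"
  unfolding ip_def by (simp add: sum_subtractf[symmetric] algebra_simps)

lemma ip_self_zero:
  assumes "ip n w w = 0"
  shows "ip n u w = 0"
proof -
  have "\<forall>S\<in>Pw n. w S * w S = 0"
    using assms unfolding ip_def by (subst sum_nonneg_eq_0_iff[symmetric]) auto
  thus ?thesis unfolding ip_def by simp
qed

lemma proj_orth_gen: "(\<forall>y\<in>set vs. ip n a y = 0) \<Longrightarrow> ip n a (proj n vs u) = 0"
proof (induction vs arbitrary: u)
  case Nil thus ?case by (simp add: ip_def)
next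
  case (Cons v vs)
  thus ?case by (simp only: proj.simps ip_lin1) simp
qed

lemma proj_orth: "\<forall>y\<in>set vs. ip n (\<lambda>U. u U - proj n vs u U) y = 0"
proof (induction vs arbitrary: u)
  case Nil thus ?case by simp
next
  case (Cons v vs)
  define q where "q = proj n vs v"
  define w where "w = (\<lambda>V. v V - q V)"
  define p where "p = proj n vs u"
  define c where "c = ip n u w / ip n w w"
  have pc: "proj n (v # vs) u = (\<lambda>U. p U + c * w U)"
    by (simp add: p_def c_def w_def q_def)
  define r where "r = (\<lambda>U. u U - (p U + c * w U))"
  have wy: "\<forall>y\<in>set vs. ip n w y = 0" using Cons.IH[of v] unfolding w_def q_def .
  have a: "\<forall>y\<in>set vs. ip n r y = 0"
  proof
    fix y assume y: "y \<in> set vs"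
    have "ip n r y = ip n (\<lambda>U. u U - p U) y - c * ip n w y"
      unfolding r_def ip_lin2 ip_diff by simp
    thus "ip n r y = 0" using Cons.IH[of u] wy y unfolding p_def by simp
  qed
  have rq: "ip n r q = 0" using proj_orth_gen[OF a] unfolding q_def .
  have pw: "ip n p w = 0" using proj_orth_gen[OF wy] ip_sym unfolding p_def by metis
  have rw: "ip n r w = 0"
  proof (cases "ip n w w = 0")
    case True
    thus ?thesis using ip_self_zero by blast
  next
    case False
    have "ip n r w = ip n u w - ip n p w - c * ip n w w" unfolding r_def ip_lin2 ..
    thus ?thesis using False pw unfolding c_def by simp
  qed
  have "ip n r v = ip n r w + ip n r q"
    unfolding w_def ip_diff_right by simp
  hence b: "ip n r v = 0" using rw rq by simp
  show ?case unfolding pc using a b unfolding r_def by auto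
qed

lemma proj_in: "(\<forall>y\<in>set vs. y \<in> cl_E n e) \<Longrightarrow> proj n vs u \<in> cl_E n e"
proof (induction vs arbitrary: u)
  case Nil thus ?case by (simp add: E_zero)
next
  case (Cons v vs)
  define q where "q = proj n vs v"
  define w where "w = (\<lambda>V. v V - q V)"
  define c where "c = ip n u w / ip n w w"
  have q: "q \<in> cl_E n e" using Cons unfolding q_def by simp
  have "(\<lambda>V. 1 * v V + (-1) * q V) \<in> cl_E n e" using Cons q by (intro E_lin) auto
  hence w: "w \<in> cl_E n e" unfolding w_def by simp
  have "(\<lambda>U. 1 * proj n vs u U + c * w U) \<in> cl_E n e" using Cons w by (intro E_lin) auto
  thus ?case by (simp add: c_def w_def q_def)
qed

subsection \<open>Projectivity\<close>

lemma fgp: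
  assumes ee: "cl_mult n e e = e"
  shows "fg_projective n e (Pn n e)"
proof -
  define m where "m = card (Pw n)"
  obtain h where h: "bij_betw h {0..<m} (Pw n)"
    using ex_bij_betw_nat_finite[OF finite_Pw] unfolding m_def by blast
  have hk: "k < m \<Longrightarrow> h k \<in> Pw n" for k using bij_betwE[OF h] by auto
  define i where "i = (\<lambda>(F::aeel) (k::nat) (x::pt). if k < m then F x (h k) else 0)"
  define r where "r = (\<lambda>(v::nat \<Rightarrow> ael) x U. \<Sum>k\<in>{0..<m}. v k x * Bv n e (h k) x U)"
  have sub: "An_submodule n e (Pn n e)"
    unfolding An_submodule_def using Pn_AE Pn_zero Pn_add Pn_smul by blast
  have 1: "\<forall>F\<in>Pn n e. i F \<in> free_mod n m"
    unfolding free_mod_def i_def using Pn_comp by auto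
  have 2: "\<forall>F\<in>Pn n e. \<forall>G\<in>Pn n e. i (ae_add F G) = fv_add (i F) (i G)"
    unfolding i_def fv_add_def ae_add_def by (auto intro!: ext)
  have 3: "\<forall>a\<in>An n. \<forall>F\<in>Pn n e. i (ae_smul a F) = fv_smul a (i F)"
    unfolding i_def fv_smul_def ae_smul_def by (auto intro!: ext)
  have 4: "\<forall>v\<in>free_mod n m. r v \<in> Pn n e"
  proof
    fix v assume v: "v \<in> free_mod n m"
    have "\<forall>k\<in>{0..<m}. v k \<in> An n \<and> Bv n e (h k) \<in> Pn n e"
      using v hk Bv_Pn unfolding free_mod_def by (auto simp del: Pow_iff)
    thus "r v \<in> Pn n e" unfolding r_def by (intro Pn_sum) auto
  qed
  have 5: "\<forall>v\<in>free_mod n m. \<forall>w\<in>free_mod n m. r (fv_add v w) = ae_add (r v) (r w)"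
    unfolding r_def fv_add_def ae_add_def by (simp add: sum.distrib distrib_right)
  have 6: "\<forall>a\<in>An n. \<forall>v\<in>free_mod n m. r (fv_smul a v) = ae_smul a (r v)"
    unfolding r_def fv_smul_def ae_smul_def by (simp add: sum_distrib_left mult.assoc)
  have 7: "\<forall>F\<in>Pn n e. r (i F) = F"
  proof
    fix F assume F: "F \<in> Pn n e"
    have "r (i F) = (\<lambda>x U. \<Sum>k\<in>{0..<m}. F x (h k) * Bv n e (h k) x U)"
      unfolding r_def i_def by (intro ext sum.cong) auto
    also have "\<dots> = (\<lambda>x U. \<Sum>S\<in>Pw n. F x S * Bv n e S x U)"
      by (intro ext sum.reindex_bij_betw[OF h])
    also have "\<dots> = F" using Pn_decomp[OF ee F] by simp
    finally show "r (i F) = F" .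
  qed
  show ?thesis unfolding fg_projective_def using sub 1 2 3 4 5 6 7 by blast
qed



lemma ip_basis: "S \<in> Pw n \<Longrightarrow> ip n (cl_basis S) g = g S"
  unfolding ip_def cl_basis_def by (simp add: if_distrib[of "\<lambda>z. z * _"] cong: if_cong)

lemma ip_sum_left: "ip n (\<lambda>U. \<Sum>k\<in>K. a k * f k U) g = (\<Sum>k\<in>K. a k * ip n (f k) g)"
  unfolding ip_def by (simp add: sum_distrib_left sum_distrib_right mult.assoc sum.swap[of _ K])

lemma ip_sum_right: "ip n r (\<lambda>U. \<Sum>k\<in>K. a k * f k U) = (\<Sum>k\<in>K. a k * ip n r (f k))"
  unfolding ip_def by (simp add: sum_distrib_left mult.left_commute sum.swap[of _ K])

lemma nondeg:
  assumes ee: "cl_mult n e e = e"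
  shows "nondegenerate_on n (Pn n e) (beta_hat n)"
  unfolding nondegenerate_on_def
proof (intro allI impI)
  fix \<phi> assume phi: "An_linear_form n (Pn n e) \<phi>"
  define c where "c S = \<phi> (Bv n e S)" for S
  have cA: "S \<in> Pw n \<Longrightarrow> c S \<in> An n" for S
    using phi Bv_Pn unfolding An_linear_form_def c_def by blast
  have phiA: "G \<in> Pn n e \<Longrightarrow> \<phi> G \<in> An n" for G
    using phi unfolding An_linear_form_def by blast
  have phiG: "\<phi> G = (\<lambda>x. \<Sum>S\<in>Pw n. G x S * c S x)" if G: "G \<in> Pn n e" for G
  proof -
    have "\<phi> G = \<phi> (\<lambda>x U. \<Sum>S\<in>Pw n. G x S * Bv n e S x U)"
      using Pn_decomp[OF ee G] by simp
    also have "\<dots> = (\<lambda>x. \<Sum>S\<in>Pw n. G x S * \<phi> (Bv n e S) x)"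
      using phi_sum[OF phi, of "Pw n" "\<lambda>S x. G x S" "Bv n e"] Pn_comp[OF G] Bv_Pn
      by (simp del: Pow_iff)
    finally show ?thesis unfolding c_def .
  qed
  obtain vs where vs: "set vs = (\<lambda>S. cl_mult n (cl_basis S) e) ` Pw n"
    using finite_list[of "(\<lambda>S. cl_mult n (cl_basis S) e) ` Pw n"] by auto
  define pi where "pi S = proj n vs (cl_basis S)" for S
  have piE: "pi S \<in> cl_E n e" for S
    unfolding pi_def using vs E_basis by (intro proj_in) (auto simp del: Pow_iff)
  have orth: "ip n (cl_basis S) g = ip n (pi S) g" if g: "g \<in> cl_E n e" for S g
  proof -
    obtain u0 where u0: "g = cl_mult n u0 e" using g unfolding cl_E_def by auto
    have g': "g = (\<lambda>V. \<Sum>T\<in>Pw n. u0 T * cl_mult n (cl_basis T) e V)"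
      unfolding u0 by (rule ext) (rule cl_mult_expand_left)
    have "ip n (\<lambda>U. cl_basis S U - pi S U) g = (\<Sum>T\<in>Pw n. u0 T * ip n (\<lambda>U. cl_basis S U - pi S U) (cl_mult n (cl_basis T) e))"
      by (subst g') (rule ip_sum_right)
    also have "\<dots> = 0"
      using proj_orth[of vs n "cl_basis S"] vs unfolding pi_def by (auto simp del: Pow_iff)
    finally show ?thesis unfolding ip_diff by simp
  qed
  define K :: real where "K = 2 ^ Suc n"
  have K: "K \<noteq> 0" unfolding K_def by simp
  define F where "F = (\<lambda>x. if x \<in> sphere_pts n then half n x (\<lambda>U. \<Sum>S\<in>Pw n. (c S x / K) * pi S U) else (\<lambda>U. 0))"
  have wE: "(\<lambda>U. \<Sum>S\<in>Pw n. (c S x / K) * pi S U) \<in> cl_E n e" for x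
    using piE by (intro E_sum) auto
  have FP: "F \<in> Pn n e"
  proof (rule PnI)
    fix x U
    show "x \<notin> sphere_pts n \<Longrightarrow> F x = (\<lambda>S. 0)" by (simp add: F_def)
    have "(\<lambda>x. F x U) = (\<lambda>x. \<Sum>S\<in>Pw n. c S x * (if x \<in> sphere_pts n then half n x (pi S) U / K else 0))"
    proof
      fix x
      show "F x U = (\<Sum>S\<in>Pw n. c S x * (if x \<in> sphere_pts n then half n x (pi S) U / K else 0))"
      proof (cases "x \<in> sphere_pts n")
        case True
        have "F x U = half n x (\<lambda>U. \<Sum>S\<in>Pw n. (c S x / K) * pi S U) U"
          unfolding F_def by (simp only: if_P[OF True])
        also have "\<dots> = (\<Sum>S\<in>Pw n. (c S x / K) * half n x (pi S) U)" by (rule half_sum)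
        also have "\<dots> = (\<Sum>S\<in>Pw n. c S x * (if x \<in> sphere_pts n then half n x (pi S) U / K else 0))"
          using True by (intro sum.cong refl) simp
        finally show ?thesis .
      next
        case False
        thus ?thesis unfolding F_def using An_off[OF cA] by (simp del: Pow_iff)
      qed
    qed
    moreover have "(\<lambda>x. \<Sum>S\<in>Pw n. c S x * (if x \<in> sphere_pts n then half n x (pi S) U / K else 0)) \<in> An n"
      by (intro An_sum ballI An_mult cA half_poly) auto
    ultimately show "(\<lambda>x. F x U) \<in> An n" by simp
    show "F x \<in> cl_E n e" unfolding F_def using half_E[OF wE] E_zero by simp
    show "x \<in> sphere_pts n \<Longrightarrow> cl_mult n (cl_xvec n x) (F x) = (\<lambda>U. - F x U)"
      unfolding F_def using half_x E_elems[OF wE] by simp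
  qed
  have ipF: "ip n (F x) (G x) = (\<Sum>S\<in>Pw n. (c S x / K) * G x S)"
    if x: "x \<in> sphere_pts n" and G: "G \<in> Pn n e" for x G
  proof -
    have "ip n (F x) (G x) = ip n (\<lambda>U. \<Sum>S\<in>Pw n. (c S x / K) * pi S U) (G x)"
      using x ip_half[OF Pn_x[OF G]] by (simp add: F_def)
    also have "\<dots> = (\<Sum>S\<in>Pw n. (c S x / K) * ip n (pi S) (G x))" by (rule ip_sum_left)
    also have "\<dots> = (\<Sum>S\<in>Pw n. (c S x / K) * G x S)"
    proof (intro sum.cong refl)
      fix S assume S: "S \<in> Pw n"
      have "ip n (pi S) (G x) = G x S" using orth[OF Pn_E[OF G], of S] ip_basis[OF S, of "G x"] by simp
      thus "(c S x / K) * ip n (pi S) (G x) = (c S x / K) * G x S" by simp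
    qed
    finally show ?thesis .
  qed
  have Fprop: "\<forall>G\<in>Pn n e. beta_hat n F G = \<phi> G"
  proof
    fix G assume G: "G \<in> Pn n e"
    show "beta_hat n F G = \<phi> G"
    proof
      fix x
      show "beta_hat n F G x = \<phi> G x"
      proof (cases "x \<in> sphere_pts n")
        case True
        have "beta_hat n F G x = K * (\<Sum>S\<in>Pw n. (c S x / K) * G x S)"
          unfolding beta_hat_def cl_beta_eq ipF[OF True G] K_def ..
        also have "\<dots> = (\<Sum>S\<in>Pw n. G x S * c S x)"
          using K by (simp add: sum_distrib_left algebra_simps)
        finally show ?thesis using phiG[OF G] by simp
      next
        case False
        thus ?thesis using An_off[OF phiA[OF G]] by (simp add: beta_hat_def cl_beta_eq F_def ip_def)
      qed
    qed
  qed
  show "\<exists>!F. F \<in> Pn n e \<and> (\<forall>G\<in>Pn n e. beta_hat n F G = \<phi> G)"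
  proof (rule ex1I[of _ F])
    show "F \<in> Pn n e \<and> (\<forall>G\<in>Pn n e. beta_hat n F G = \<phi> G)" using FP Fprop by blast
  next
    fix F' assume F': "F' \<in> Pn n e \<and> (\<forall>G\<in>Pn n e. beta_hat n F' G = \<phi> G)"
    have F'P: "F' \<in> Pn n e" using F' by blast
    have eq: "ip n (F' x) (G x) = ip n (F x) (G x)" if G: "G \<in> Pn n e" for G x
    proof -
      have "beta_hat n F' G x = beta_hat n F G x" using F' Fprop G by simp
      thus ?thesis unfolding beta_hat_def cl_beta_eq by simp
    qed
    show "F' = F"
    proof (intro ext)
      fix x U
      show "F' x U = F x U"
      proof (cases "x \<in> sphere_pts n")
        case False thus ?thesis using Pn_off[OF F'P] Pn_off[OF FP] by simp
      next
        case True
        have "(\<Sum>V\<in>Pw n. (F' x V - F x V) * (F' x V - F x V))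
            = (ip n (F' x) (F' x) - ip n (F x) (F' x)) - (ip n (F' x) (F x) - ip n (F x) (F x))"
          unfolding ip_def by (simp add: sum_subtractf[symmetric] algebra_simps)
        also have "\<dots> = 0" using eq[OF F'P] eq[OF FP] by simp
        finally have "\<forall>V\<in>Pw n. (F' x V - F x V) * (F' x V - F x V) = 0"
          by (subst sum_nonneg_eq_0_iff[symmetric]) auto
        hence inP: "U \<in> Pw n \<Longrightarrow> F' x U = F x U" by auto
        have outP: "F' x U = F x U" if U: "U \<notin> Pw n"
        proof -
          have nU: "\<not> U \<subseteq> {..n}" using U by simp
          have "F' x U = 0" "F x U = 0"
            using E_elems[OF Pn_E[OF F'P], of x] E_elems[OF Pn_E[OF FP], of x] nU
            unfolding cl_elems_def by blast+
          thus ?thesis by simp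
        qed
        show ?thesis using inP outP by blast
      qed
    qed
  qed
qed

theorem mainTheorem3:
  fixes n :: nat and e :: cl
  assumes "n \<ge> 1"
    and "primitive_idempotent n e"
  shows "fg_projective n e (Pn n e) \<and> nondegenerate_on n (Pn n e) (beta_hat n)"
proof -
  have ee: "cl_mult n e e = e"
    using assms(2) unfolding primitive_idempotent_def cl_idempotent_def by blast
  show ?thesis using fgp[OF ee] nondeg[OF ee] by blast
qed

end
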